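(* For simple random walk on a finite tree $T=(S,E)$ with a unique self-loop added at one vertex, for every $\varepsilon\in(0,1)$, \[ t_{\rm mix}(\varepsilon)\le\big(2\,\mathrm{diam}(T)+1\big)|E|\,\log\!\Big(\frac{2|E|}{\varepsilon}\Big). \]
   Context: $|E|$ counts the self-loop as one edge. Degrees count the self-loop twice; simple random walk moves from $v$ along a uniformly chosen edge-end at $v$, with transition matrix $P$ and stationary distribution $\pi(v)=\deg(v)/\sum_z\deg(z)$. $t_{\rm mix}(\varepsilon)=\min\{t:\max_x\|P^t(x,\cdot)-\pi\|_{TV}\le\varepsilon\}$. $\mathrm{diam}(T)$ is the maximal graph distance between two vertices. *)

theory Defs
  imports Complex_Main
begin

definition simple_graph :: "'a set \<Rightarrow> ('a \<Rightarrow> 'a \<Rightarrow> bool) \<Rightarrow> bool" where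
  "simple_graph S adj \<longleftrightarrow> finite S \<and>
     (\<forall>x y. adj x y \<longrightarrow> x \<in> S \<and> y \<in> S \<and> adj y x \<and> x \<noteq> y)"

definition is_walk :: "('a \<Rightarrow> 'a \<Rightarrow> bool) \<Rightarrow> 'a \<Rightarrow> 'a \<Rightarrow> 'a list \<Rightarrow> bool" where
  "is_walk adj x y xs \<longleftrightarrow> xs \<noteq> [] \<and> hd xs = x \<and> last xs = y \<and> successively adj xs"

definition graph_connected :: "'a set \<Rightarrow> ('a \<Rightarrow> 'a \<Rightarrow> bool) \<Rightarrow> bool" where
  "graph_connected S adj \<longleftrightarrow> (\<forall>x\<in>S. \<forall>y\<in>S. \<exists>xs. is_walk adj x y xs)"

definition is_cycle :: "('a \<Rightarrow> 'a \<Rightarrow> bool) \<Rightarrow> 'a list \<Rightarrow> bool" where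
  "is_cycle adj xs \<longleftrightarrow> length xs \<ge> 3 \<and> distinct xs \<and> successively adj xs \<and> adj (last xs) (hd xs)"

definition is_tree :: "'a set \<Rightarrow> ('a \<Rightarrow> 'a \<Rightarrow> bool) \<Rightarrow> bool" where
  "is_tree S adj \<longleftrightarrow> S \<noteq> {} \<and> simple_graph S adj \<and> graph_connected S adj \<and>
     \<not> (\<exists>xs. is_cycle adj xs)"

definition graph_dist :: "('a \<Rightarrow> 'a \<Rightarrow> bool) \<Rightarrow> 'a \<Rightarrow> 'a \<Rightarrow> nat" where
  "graph_dist adj x y = (LEAST n. \<exists>xs. is_walk adj x y xs \<and> length xs = Suc n)"

definition diam :: "'a set \<Rightarrow> ('a \<Rightarrow> 'a \<Rightarrow> bool) \<Rightarrow> nat" where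
  "diam S adj = Max {graph_dist adj x y | x y. x \<in> S \<and> y \<in> S}"

text \<open>Number of edges |E|: tree edges plus the self-loop (counted once).\<close>
definition num_edges :: "('a \<Rightarrow> 'a \<Rightarrow> bool) \<Rightarrow> nat" where
  "num_edges adj = card {{x, y} | x y. adj x y} + 1"

text \<open>Degree: the self-loop at r counts twice.\<close>
definition deg :: "('a \<Rightarrow> 'a \<Rightarrow> bool) \<Rightarrow> 'a \<Rightarrow> 'a \<Rightarrow> nat" where
  "deg adj r v = card {y. adj v y} + (if v = r then 2 else 0)"

text \<open>Simple random walk: move along a uniformly chosen edge-end at the current vertex.\<close>
definition trans :: "('a \<Rightarrow> 'a \<Rightarrow> bool) \<Rightarrow> 'a \<Rightarrow> 'a \<Rightarrow> 'a \<Rightarrow> real" where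
  "trans adj r x y =
     ((if adj x y then 1 else 0) + (if x = y \<and> x = r then 2 else 0)) / real (deg adj r x)"

fun trans_pow :: "'a set \<Rightarrow> ('a \<Rightarrow> 'a \<Rightarrow> bool) \<Rightarrow> 'a \<Rightarrow> nat \<Rightarrow> 'a \<Rightarrow> 'a \<Rightarrow> real" where
  "trans_pow S adj r 0 x y = (if x = y then 1 else 0)"
| "trans_pow S adj r (Suc t) x y = (\<Sum>z\<in>S. trans_pow S adj r t x z * trans adj r z y)"

definition stat_dist :: "'a set \<Rightarrow> ('a \<Rightarrow> 'a \<Rightarrow> bool) \<Rightarrow> 'a \<Rightarrow> 'a \<Rightarrow> real" where
  "stat_dist S adj r v = real (deg adj r v) / (\<Sum>z\<in>S. real (deg adj r z))"

definition tv_dist :: "'a set \<Rightarrow> ('a \<Rightarrow> real) \<Rightarrow> ('a \<Rightarrow> real) \<Rightarrow> real" where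
  "tv_dist S \<mu> \<nu> = (1/2) * (\<Sum>y\<in>S. \<bar>\<mu> y - \<nu> y\<bar>)"

definition t_mix :: "'a set \<Rightarrow> ('a \<Rightarrow> 'a \<Rightarrow> bool) \<Rightarrow> 'a \<Rightarrow> real \<Rightarrow> nat" where
  "t_mix S adj r \<epsilon> = (LEAST t. \<forall>x\<in>S.
      tv_dist S (trans_pow S adj r t x) (stat_dist S adj r) \<le> \<epsilon>)"

end

theory Submission
  imports Defs
begin
lemma exp2_le8: "exp (2::real) \<le> 8"
proof -
  have "exp (1/16::real) \<le> 1 + 1/16 + (1/16)^2" by (rule exp_bound) auto
  hence "exp (1/16::real) ^ 32 \<le> (1 + 1/16 + (1/16)^2) ^ 32" by (rule power_mono) simp
  also have "(1 + 1/16 + (1/16)^2::real) = 273/256" by (simp add: power2_eq_square)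
  also have "(273/256::real) ^ 32 \<le> 8" by (simp add: power_divide)
  also have "exp (1/16::real) ^ 32 = exp 2" by (simp add: exp_of_nat_mult[symmetric])
  finally show ?thesis by simp
qed

lemma successively_nth: "successively P xs \<Longrightarrow> Suc i < length xs \<Longrightarrow> P (xs!i) (xs!Suc i)"
proof (induction xs arbitrary: i)
  case (Cons a xs) thus ?case by (cases xs; cases i) auto
qed auto

lemma double_sum_sq:
  fixes a b :: "'b \<Rightarrow> real"
  shows "(\<Sum>i\<in>A. \<Sum>j\<in>A. a i * a j * (b i - b j)^2)
    = 2 * (\<Sum>i\<in>A. a i) * (\<Sum>i\<in>A. a i * (b i)^2) - 2 * (\<Sum>i\<in>A. a i * b i)^2"
proof -
  have "(\<Sum>i\<in>A. \<Sum>j\<in>A. a i * a j * (b i - b j)^2)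
     = (\<Sum>i\<in>A. \<Sum>j\<in>A. (a i * (b i)^2) * a j + a i * (a j * (b j)^2) - 2 * ((a i * b i) * (a j * b j)))"
    by (intro sum.cong refl) (simp add: power2_diff algebra_simps)
  also have "\<dots> = (\<Sum>i\<in>A. \<Sum>j\<in>A. (a i * (b i)^2) * a j) + (\<Sum>i\<in>A. \<Sum>j\<in>A. a i * (a j * (b j)^2)) - (\<Sum>i\<in>A. \<Sum>j\<in>A. 2 * ((a i * b i) * (a j * b j)))"
    by (simp only: sum.distrib sum_subtractf)
  also have "(\<Sum>i\<in>A. \<Sum>j\<in>A. (a i * (b i)^2) * a j) = (\<Sum>i\<in>A. a i * (b i)^2) * (\<Sum>j\<in>A. a j)"
    by (simp add: sum_product)
  also have "(\<Sum>i\<in>A. \<Sum>j\<in>A. a i * (a j * (b j)^2)) = (\<Sum>i\<in>A. a i) * (\<Sum>j\<in>A. a j * (b j)^2)"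
    by (simp add: sum_product)
  also have "(\<Sum>i\<in>A. \<Sum>j\<in>A. 2 * ((a i * b i) * (a j * b j))) = 2 * ((\<Sum>i\<in>A. a i * b i) * (\<Sum>j\<in>A. a j * b j))"
  proof -
    have "(\<Sum>i\<in>A. \<Sum>j\<in>A. 2 * ((a i * b i) * (a j * b j))) = 2 * (\<Sum>i\<in>A. \<Sum>j\<in>A. (a i * b i) * (a j * b j))"
      by (simp add: sum_distrib_left)
    thus ?thesis by (simp add: sum_product)
  qed
  finally show ?thesis by (simp add: power2_eq_square algebra_simps)
qed

lemma weighted_cs:
  fixes a b :: "'b \<Rightarrow> real"
  assumes "\<And>i. i \<in> A \<Longrightarrow> 0 \<le> a i"
  shows "(\<Sum>i\<in>A. a i * b i)^2 \<le> (\<Sum>i\<in>A. a i) * (\<Sum>i\<in>A. a i * (b i)^2)"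
proof -
  have "0 \<le> (\<Sum>i\<in>A. \<Sum>j\<in>A. a i * a j * (b i - b j)^2)"
    using assms by (intro sum_nonneg) auto
  thus ?thesis unfolding double_sum_sq by simp
qed

lemma cs_count:
  fixes b :: "nat \<Rightarrow> real"
  shows "(\<Sum>i<k. b i)^2 \<le> real k * (\<Sum>i<k. (b i)^2)"
  using weighted_cs[of "{..<k}" "\<lambda>_. 1" b] by simp

locale tr =
  fixes S :: "'a set" and adj :: "'a \<Rightarrow> 'a \<Rightarrow> bool" and r :: 'a
  assumes sg: "simple_graph S adj" and con: "graph_connected S adj" and rS: "r \<in> S"
begin

definition w :: "'a \<Rightarrow> 'a \<Rightarrow> real" where
  "w x y = (if adj x y then 1 else 0) + (if x = y \<and> x = r then 2 else 0)"
definition dg :: "'a \<Rightarrow> real" where "dg x = real (deg adj r x)"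
definition Z :: real where "Z = (\<Sum>x\<in>S. dg x)"
definition AdjS :: "('a \<times> 'a) set" where "AdjS = {(u,v). adj u v}"

lemma fin: "finite S" using sg by (simp add: simple_graph_def)
lemma adjD: "adj x y \<Longrightarrow> x \<in> S \<and> y \<in> S \<and> adj y x \<and> x \<noteq> y"
  using sg by (simp add: simple_graph_def)

lemma AdjS_sub: "AdjS \<subseteq> S \<times> S" using adjD by (auto simp: AdjS_def)
lemma fin_AdjS: "finite AdjS" using AdjS_sub fin finite_subset by blast

lemma w_sym: "w x y = w y x" using adjD by (auto simp: w_def)
lemma w_nonneg: "0 \<le> w x y" by (simp add: w_def)

lemma nbr_sub: "{y. adj x y} \<subseteq> S" using adjD by auto
lemma fin_nbr: "finite {y. adj x y}" using nbr_sub fin finite_subset by blast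

lemma dg_sum: "x \<in> S \<Longrightarrow> (\<Sum>y\<in>S. w x y) = dg x"
proof -
  assume x: "x \<in> S"
  have "(\<Sum>y\<in>S. w x y) = (\<Sum>y\<in>S. (if adj x y then 1 else 0)) + (\<Sum>y\<in>S. (if x = y \<and> x = r then 2 else 0::real))"
    by (simp add: w_def sum.distrib)
  also have "(\<Sum>y\<in>S. (if adj x y then 1 else 0::real)) = real (card {y\<in>S. adj x y})"
    using fin by (simp add: sum.If_cases Int_def)
  also have "{y\<in>S. adj x y} = {y. adj x y}" using nbr_sub by auto
  also have "(\<Sum>y\<in>S. (if x = y \<and> x = r then 2 else 0::real)) = (if x = r then 2 else 0)"
    using fin x by (auto simp: sum.delta)
  finally show ?thesis by (simp add: dg_def deg_def)
qed

lemma walk_ex: "x \<in> S \<Longrightarrow> y \<in> S \<Longrightarrow> \<exists>xs. is_walk adj x y xs"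
  using con by (auto simp: graph_connected_def)

lemma dg_ge1: "x \<in> S \<Longrightarrow> 1 \<le> dg x"
proof -
  assume x: "x \<in> S"
  show ?thesis
  proof (cases "x = r")
    case True thus ?thesis by (simp add: dg_def deg_def)
  next
    case False
    obtain xs where xs: "is_walk adj x r xs" using walk_ex x rS by blast
    have "length xs \<ge> 2"
    proof (rule ccontr)
      assume "\<not> ?thesis"
      moreover have "length xs \<noteq> 0" using xs by (simp add: is_walk_def)
      ultimately have "length xs = 1" by linarith
      then obtain a where "xs = [a]" by (cases xs) auto
      with xs False show False by (auto simp: is_walk_def)
    qed
    then have "adj (xs!0) (xs!Suc 0)" using xs successively_nth[of adj xs 0] by (auto simp: is_walk_def)
    moreover have "xs!0 = x" using xs by (cases xs) (auto simp: is_walk_def)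
    ultimately have "{y. adj x y} \<noteq> {}" by auto
    hence "card {y. adj x y} \<ge> 1" using fin_nbr by (simp add: Suc_le_eq card_gt_0_iff)
    thus ?thesis by (simp add: dg_def deg_def)
  qed
qed

lemma dg_pos: "x \<in> S \<Longrightarrow> 0 < dg x" using dg_ge1 by fastforce

lemma Z_eq: "Z = 2 * real (num_edges adj)"
proof -
  have "(\<Sum>x\<in>S. dg x) = (\<Sum>x\<in>S. real (card {y. adj x y})) + 2"
  proof -
    have "(\<Sum>x\<in>S. dg x) = (\<Sum>x\<in>S. real (card {y. adj x y}) + (if x = r then 2 else 0))"
      by (rule sum.cong) (auto simp: dg_def deg_def)
    also have "\<dots> = (\<Sum>x\<in>S. real (card {y. adj x y})) + 2"
      using fin rS by (simp add: sum.distrib sum.delta)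
    finally show ?thesis .
  qed
  also have "(\<Sum>x\<in>S. real (card {y. adj x y})) = real (card AdjS)"
  proof -
    have "AdjS = Sigma S (\<lambda>x. {y. adj x y})" using adjD by (auto simp: AdjS_def)
    hence "card AdjS = (\<Sum>x\<in>S. card {y. adj x y})" using fin fin_nbr by (simp add: card_SigmaI)
    thus ?thesis by simp
  qed
  also have "card AdjS = 2 * card {{x, y} | x y. adj x y}"
  proof -
    let ?U = "{{x, y} | x y. adj x y}"
    let ?f = "\<lambda>p::'a\<times>'a. {fst p, snd p}"
    have finU: "finite ?U"
    proof -
      have "?U = ?f ` AdjS" by (auto simp: AdjS_def image_iff; blast)
      thus ?thesis using fin_AdjS by simp
    qed
    have "(\<Sum>e\<in>?U. card {p\<in>AdjS. ?f p = e}) = card AdjS"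
    proof -
      have sub: "?f ` AdjS \<subseteq> ?U" by (auto simp: AdjS_def; blast)
      show ?thesis using sum.group[OF fin_AdjS finU sub, of "\<lambda>_. 1::nat"] by simp
    qed
    moreover have "card {p\<in>AdjS. ?f p = e} = 2" if eU: "e \<in> ?U" for e
    proof -
      obtain x y where e: "e = {x,y}" and a: "adj x y" using eU by blast
      have "{p\<in>AdjS. ?f p = e} = {(x,y),(y,x)}" using a adjD e
        by (auto simp: AdjS_def doubleton_eq_iff)
      thus ?thesis using adjD[OF a] by simp
    qed
    ultimately show ?thesis by simp
  qed
  finally show ?thesis by (simp add: Z_def num_edges_def)
qed

end

lemma walk_shorten:
  assumes "is_walk adj x y xs" "\<not> distinct xs"
  shows "\<exists>ys. is_walk adj x y ys \<and> length ys < length xs"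
proof -
  obtain as bs cs v where xs: "xs = as @ [v] @ bs @ [v] @ cs" using not_distinct_decomp[OF assms(2)] by blast
  let ?ys = "as @ [v] @ cs"
  have s: "successively adj xs" using assms(1) by (simp add: is_walk_def)
  have s1: "successively adj (as @ [v])" using s unfolding xs
    by (simp add: successively_append_iff)
  have "xs = (as @ [v] @ bs) @ (v # cs)" using xs by simp
  hence s2: "successively adj ([v] @ cs)" using s successively_append_iff[of adj "as @ [v] @ bs" "v # cs"]
    by simp
  have "successively adj ?ys" using s1 s2
    by (auto simp: successively_append_iff successively_Cons)
  moreover have "hd ?ys = x" using assms(1) xs by (cases as) (auto simp: is_walk_def)
  moreover have "last ?ys = y" using assms(1) xs by (cases cs) (auto simp: is_walk_def)
  moreover have "length ?ys < length xs" using xs by simp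
  ultimately show ?thesis unfolding is_walk_def by blast
qed

context tr begin

lemma short_walk:
  assumes x: "x \<in> S" and y: "y \<in> S"
  shows "\<exists>xs. is_walk adj x y xs \<and> distinct xs \<and> length xs \<le> Suc (diam S adj)"
proof -
  define P where "P = (\<lambda>n. \<exists>xs. is_walk adj x y xs \<and> length xs = Suc n)"
  have gd: "graph_dist adj x y = Least P" unfolding graph_dist_def P_def by simp
  obtain xs0 where w0: "is_walk adj x y xs0" using walk_ex x y by blast
  have "length xs0 = Suc (length xs0 - 1)" using w0 by (cases xs0) (simp_all add: is_walk_def)
  hence ex: "P (length xs0 - 1)" unfolding P_def using w0 by metis
  have "P (Least P)" using ex by (rule LeastI[where P=P])
  then obtain xs where xs: "is_walk adj x y xs" "length xs = Suc (graph_dist adj x y)"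
    unfolding P_def gd by blast
  have dist: "distinct xs"
  proof (rule ccontr)
    assume nd: "\<not> distinct xs"
    obtain ys where ys: "is_walk adj x y ys" "length ys < length xs" using walk_shorten[OF xs(1) nd] by blast
    have ly: "length ys = Suc (length ys - 1)" using ys(1) by (cases ys) (simp_all add: is_walk_def)
    hence "P (length ys - 1)" unfolding P_def using ys(1) by metis
    hence "Least P \<le> length ys - 1" by (rule Least_le)
    thus False using ys(2) xs(2) gd ly by linarith
  qed
  have "{graph_dist adj x y | x y. x \<in> S \<and> y \<in> S} \<subseteq> (\<lambda>p. graph_dist adj (fst p) (snd p)) ` (S \<times> S)"
  proof
    fix d assume "d \<in> {graph_dist adj x y | x y. x \<in> S \<and> y \<in> S}"
    then obtain a b where "d = graph_dist adj a b" "a \<in> S" "b \<in> S" by blast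
    thus "d \<in> (\<lambda>p. graph_dist adj (fst p) (snd p)) ` (S \<times> S)"
      by (intro image_eqI[of _ _ "(a,b)"]) auto
  qed
  hence "finite {graph_dist adj x y | x y. x \<in> S \<and> y \<in> S}" using fin finite_subset by blast
  moreover have "graph_dist adj x y \<in> {graph_dist adj x y | x y. x \<in> S \<and> y \<in> S}" using x y by blast
  ultimately have "graph_dist adj x y \<le> diam S adj" unfolding diam_def by (rule Max_ge)
  thus ?thesis using xs dist by (intro exI[of _ xs]) simp
qed

lemma walk_in_S: "is_walk adj x y xs \<Longrightarrow> x \<in> S \<Longrightarrow> i < length xs \<Longrightarrow> xs ! i \<in> S"
proof -
  assume w: "is_walk adj x y xs" and x: "x \<in> S" and i: "i < length xs"
  show ?thesis
  proof (cases i)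
    case 0 thus ?thesis using w x by (cases xs) (auto simp: is_walk_def)
  next
    case (Suc j)
    hence "adj (xs!j) (xs!Suc j)" using successively_nth[of adj xs j] w i by (auto simp: is_walk_def)
    thus ?thesis using adjD[of "xs!j" "xs!Suc j"] Suc by simp
  qed
qed

end

context tr begin

lemma path_sum:
  fixes H :: "'a \<times> 'a \<Rightarrow> real"
  assumes w: "is_walk adj x y xs" and d: "distinct xs" and H: "\<And>p. 0 \<le> H p"
  shows "(\<Sum>i<length xs - 1. H (xs!i, xs!Suc i) + H (xs!Suc i, xs!i)) \<le> sum H AdjS"
proof -
  let ?k = "length xs - 1"
  let ?p = "\<lambda>i. (xs!i, xs!Suc i)" and ?q = "\<lambda>i. (xs!Suc i, xs!i)"
  have ip: "inj_on ?p {..<?k}" using d by (auto simp: inj_on_def nth_eq_iff_index_eq)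
  have iq: "inj_on ?q {..<?k}" using d by (auto simp: inj_on_def nth_eq_iff_index_eq)
  have disj: "?p ` {..<?k} \<inter> ?q ` {..<?k} = {}"
  proof (rule ccontr)
    assume "\<not> ?thesis"
    then obtain i j where ij: "i < ?k" "j < ?k" "xs!i = xs!Suc j" "xs!Suc i = xs!j" by auto
    hence "i = Suc j" "Suc i = j" using d by (auto simp: nth_eq_iff_index_eq)
    thus False by simp
  qed
  have sub: "?p ` {..<?k} \<union> ?q ` {..<?k} \<subseteq> AdjS"
  proof -
    have "adj (xs!i) (xs!Suc i)" if "i < ?k" for i
      using successively_nth[of adj xs i] w that by (auto simp: is_walk_def)
    moreover have "adj (xs!Suc i) (xs!i)" if "i < ?k" for i
      using adjD[of "xs!i" "xs!Suc i"] \<open>\<And>i. i < ?k \<Longrightarrow> adj (xs!i) (xs!Suc i)\<close>[OF that] by blast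
    ultimately show ?thesis by (auto simp: AdjS_def)
  qed
  have "(\<Sum>i<?k. H (xs!i, xs!Suc i) + H (xs!Suc i, xs!i)) = sum H (?p ` {..<?k}) + sum H (?q ` {..<?k})"
    unfolding sum.reindex[OF ip] sum.reindex[OF iq] by (simp add: sum.distrib)
  also have "\<dots> = sum H (?p ` {..<?k} \<union> ?q ` {..<?k})"
    by (rule sum.union_disjoint[symmetric]) (use disj in auto)
  also have "\<dots> \<le> sum H AdjS" using sum_mono2[OF fin_AdjS sub, of H] H by blast
  finally show ?thesis .
qed

lemma AdjS_sum: "sum H AdjS = (\<Sum>u\<in>S. \<Sum>v\<in>S. if adj u v then H (u,v) else 0)"
proof -
  have "(\<Sum>u\<in>S. \<Sum>v\<in>S. if adj u v then H (u,v) else 0) = (\<Sum>p\<in>S\<times>S. if adj (fst p) (snd p) then H p else 0)"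
  proof -
    have "(\<Sum>u\<in>S. \<Sum>v\<in>S. if adj u v then H (u,v) else 0) = (\<Sum>p\<in>S\<times>S. (\<lambda>(u,v). if adj u v then H (u,v) else 0) p)"
      by (simp add: sum.cartesian_product)
    also have "\<dots> = (\<Sum>p\<in>S\<times>S. if adj (fst p) (snd p) then H p else 0)"
      by (rule sum.cong) (auto split: prod.splits)
    finally show ?thesis .
  qed
  also have "\<dots> = sum H {p\<in>S\<times>S. adj (fst p) (snd p)}"
    using fin by (simp add: sum.inter_filter)
  also have "{p\<in>S\<times>S. adj (fst p) (snd p)} = AdjS" using AdjS_sub by (auto simp: AdjS_def)
  finally show ?thesis by simp
qed

end

lemma key_ineq:
  fixes B c s k :: real
  assumes k: "0 \<le> k" and s: "0 \<le> s" and Bs: "B^2 \<le> k * s"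
  shows "(B + c)^2 \<le> (k + 1/4) * (s + 4 * c^2)"
proof (cases "k = 0")
  case True
  hence "B = 0" using Bs by simp
  thus ?thesis using True s by simp
next
  case False
  hence kp: "0 < k" using k by simp
  have "k * (B + c)^2 \<le> (k + 1/4) * (B^2 + 4*k*c^2)"
  proof -
    have "(k + 1/4) * (B^2 + 4*k*c^2) - k * (B + c)^2 = (B/2 - 2*k*c)^2"
      by (simp add: power2_eq_square algebra_simps)
    thus ?thesis by (smt (verit) zero_le_power2)
  qed
  also have "\<dots> \<le> (k + 1/4) * (k * s + 4*k*c^2)"
    using Bs k by (intro mult_left_mono) auto
  also have "\<dots> = k * ((k + 1/4) * (s + 4 * c^2))" by (simp add: algebra_simps)
  finally show ?thesis using kp by simp
qed

context tr begin

definition N :: "('a \<Rightarrow> real) \<Rightarrow> real" where "N f = (\<Sum>x\<in>S. dg x * (f x)^2)"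
definition M :: "('a \<Rightarrow> real) \<Rightarrow> real" where "M f = (\<Sum>x\<in>S. dg x * f x)"
definition I :: "('a \<Rightarrow> real) \<Rightarrow> ('a \<Rightarrow> real) \<Rightarrow> real" where
  "I f g = (\<Sum>x\<in>S. \<Sum>y\<in>S. w x y * f x * g y)"
definition W :: "('a \<Rightarrow> real) \<Rightarrow> real" where "W f = (\<Sum>x\<in>S. \<Sum>y\<in>S. w x y * (f x - f y)^2)"
definition Wp :: "('a \<Rightarrow> real) \<Rightarrow> real" where "Wp f = (\<Sum>x\<in>S. \<Sum>y\<in>S. w x y * (f x + f y)^2)"

lemma sum_w_left: "(\<Sum>x\<in>S. \<Sum>y\<in>S. w x y * g x) = (\<Sum>x\<in>S. dg x * g x)"
proof (rule sum.cong[OF refl])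
  fix x assume "x \<in> S"
  thus "(\<Sum>y\<in>S. w x y * g x) = dg x * g x" using dg_sum by (simp add: sum_distrib_right[symmetric])
qed

lemma sum_w_right: "(\<Sum>x\<in>S. \<Sum>y\<in>S. w x y * g y) = (\<Sum>x\<in>S. dg x * g x)"
proof -
  have "(\<Sum>x\<in>S. \<Sum>y\<in>S. w x y * g y) = (\<Sum>y\<in>S. \<Sum>x\<in>S. w y x * g y)"
    by (subst sum.swap) (simp add: w_sym)
  thus ?thesis using sum_w_left by simp
qed

lemma W_eq: "W f = 2 * N f - 2 * I f f"
proof -
  have "W f = (\<Sum>x\<in>S. \<Sum>y\<in>S. w x y * (f x)^2 + w x y * (f y)^2 - 2 * (w x y * f x * f y))"
    unfolding W_def by (intro sum.cong refl) (simp add: power2_diff algebra_simps)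
  also have "\<dots> = (\<Sum>x\<in>S. \<Sum>y\<in>S. w x y * (f x)^2) + (\<Sum>x\<in>S. \<Sum>y\<in>S. w x y * (f y)^2) - 2 * I f f"
    unfolding I_def by (simp add: sum.distrib sum_subtractf sum_distrib_left)
  finally show ?thesis unfolding sum_w_left sum_w_right N_def by simp
qed

lemma Wp_eq: "Wp f = 2 * N f + 2 * I f f"
proof -
  have "Wp f = (\<Sum>x\<in>S. \<Sum>y\<in>S. w x y * (f x)^2 + w x y * (f y)^2 + 2 * (w x y * f x * f y))"
    unfolding Wp_def by (intro sum.cong refl) (simp add: power2_sum algebra_simps)
  also have "\<dots> = (\<Sum>x\<in>S. \<Sum>y\<in>S. w x y * (f x)^2) + (\<Sum>x\<in>S. \<Sum>y\<in>S. w x y * (f y)^2) + 2 * I f f"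
    unfolding I_def by (simp add: sum.distrib sum_distrib_left)
  finally show ?thesis unfolding sum_w_left sum_w_right N_def by simp
qed

lemma W_nonneg: "0 \<le> W f" unfolding W_def by (intro sum_nonneg mult_nonneg_nonneg w_nonneg) auto
lemma Wp_nonneg: "0 \<le> Wp f" unfolding Wp_def by (intro sum_nonneg mult_nonneg_nonneg w_nonneg) auto

lemma AdjS_le_W:
  assumes "\<And>u v. 0 \<le> G u v"
  shows "(\<Sum>u\<in>S. \<Sum>v\<in>S. if adj u v then G u v else 0) \<le> (\<Sum>u\<in>S. \<Sum>v\<in>S. w u v * G u v)"
  using assms by (intro sum_mono) (auto simp: w_def)

lemma walk_nth0: "is_walk adj x y xs \<Longrightarrow> xs ! 0 = x"
  by (cases xs) (auto simp: is_walk_def)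
lemma walk_nthlast: "is_walk adj x y xs \<Longrightarrow> xs ! (length xs - 1) = y"
  by (auto simp: is_walk_def last_conv_nth)

lemma pair_bound:
  assumes x: "x \<in> S" and y: "y \<in> S"
  shows "(f x - f y)^2 \<le> real (diam S adj) / 2 * W f"
proof -
  obtain xs where xs: "is_walk adj x y xs" "distinct xs" "length xs \<le> Suc (diam S adj)"
    using short_walk[OF x y] by blast
  define k where "k = length xs - 1"
  define a where "a i = f (xs!i) - f (xs!Suc i)" for i
  have kD: "k \<le> diam S adj" using xs(3) k_def by simp
  have "f x - f y = (\<Sum>i<k. a i)"
    unfolding a_def sum_lessThan_telescope'[of "\<lambda>i. f (xs!i)"] k_def
    using walk_nth0[OF xs(1)] walk_nthlast[OF xs(1)] by simp
  hence "(f x - f y)^2 \<le> real k * (\<Sum>i<k. (a i)^2)" using cs_count by simp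
  also have "(\<Sum>i<k. (a i)^2) \<le> W f / 2"
  proof -
    let ?H = "\<lambda>p. (f (fst p) - f (snd p))^2"
    have "(\<Sum>i<k. ?H (xs!i, xs!Suc i) + ?H (xs!Suc i, xs!i)) \<le> sum ?H AdjS"
      unfolding k_def by (rule path_sum[OF xs(1) xs(2)]) simp
    moreover have "(\<Sum>i<k. ?H (xs!i, xs!Suc i) + ?H (xs!Suc i, xs!i)) = 2 * (\<Sum>i<k. (a i)^2)"
      unfolding a_def by (simp add: sum_distrib_left power2_commute)
    moreover have "sum ?H AdjS \<le> W f" unfolding AdjS_sum W_def
      using AdjS_le_W[of "\<lambda>u v. (f u - f v)^2"] by (simp only: fst_conv snd_conv zero_le_power2)
    ultimately show ?thesis by simp
  qed
  hence "real k * (\<Sum>i<k. (a i)^2) \<le> real k * (W f / 2)" by (intro mult_left_mono) auto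
  also have "\<dots> \<le> real (diam S adj) * (W f / 2)" using kD W_nonneg by (intro mult_right_mono) auto
  finally show ?thesis by simp
qed

lemma gap_bound:
  assumes M0: "M f = 0"
  shows "N f \<le> real (diam S adj) * Z / 4 * W f"
proof -
  have Zp: "0 < Z" unfolding Z_def using rS fin dg_pos
    by (metis dg_ge1 order_less_le_trans sum_pos zero_less_one empty_iff)
  have "(\<Sum>i\<in>S. \<Sum>j\<in>S. dg i * dg j * (f i - f j)^2) = 2 * Z * N f"
    using double_sum_sq[where a=dg and b=f and A=S] M0 unfolding M_def N_def Z_def by simp
  moreover have "(\<Sum>i\<in>S. \<Sum>j\<in>S. dg i * dg j * (f i - f j)^2) \<le> (\<Sum>i\<in>S. \<Sum>j\<in>S. dg i * dg j * (real (diam S adj) / 2 * W f))"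
    using pair_bound dg_pos by (intro sum_mono mult_left_mono) (auto intro: less_imp_le)
  moreover have "(\<Sum>i\<in>S. \<Sum>j\<in>S. dg i * dg j * (real (diam S adj) / 2 * W f)) = Z * Z * (real (diam S adj) / 2 * W f)"
  proof -
    have "(\<Sum>i\<in>S. \<Sum>j\<in>S. dg i * dg j * (real (diam S adj) / 2 * W f)) = (\<Sum>i\<in>S. \<Sum>j\<in>S. dg i * dg j) * (real (diam S adj) / 2 * W f)"
      by (simp add: sum_distrib_right)
    also have "(\<Sum>i\<in>S. \<Sum>j\<in>S. dg i * dg j) = Z * Z" unfolding Z_def by (simp add: sum_product)
    finally show ?thesis .
  qed
  ultimately have "2 * Z * N f \<le> Z * Z * (real (diam S adj) / 2 * W f)" by simp
  hence "Z * (2 * N f) \<le> Z * (Z * (real (diam S adj) / 2 * W f))" by (simp add: algebra_simps)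
  hence "2 * N f \<le> Z * (real (diam S adj) / 2 * W f)" using Zp by simp
  thus ?thesis by (simp add: algebra_simps)
qed

end

context tr begin

lemma Wp_split: "Wp f = (\<Sum>u\<in>S. \<Sum>v\<in>S. if adj u v then (f u + f v)^2 else 0) + 8 * (f r)^2"
proof -
  have "Wp f = (\<Sum>u\<in>S. \<Sum>v\<in>S. (if adj u v then (f u + f v)^2 else 0) + (if u = r then (if v = u then 2 * (f u + f v)^2 else 0) else 0))"
    unfolding Wp_def by (intro sum.cong refl) (auto simp: w_def)
  also have "\<dots> = (\<Sum>u\<in>S. \<Sum>v\<in>S. if adj u v then (f u + f v)^2 else 0) + (\<Sum>u\<in>S. \<Sum>v\<in>S. (if u = r then (if v = u then 2 * (f u + f v)^2 else 0) else 0))"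
    by (simp add: sum.distrib)
  also have "(\<Sum>u\<in>S. \<Sum>v\<in>S. (if u = r then (if v = u then 2 * (f u + f v)^2 else 0) else 0)) = (\<Sum>u\<in>S. (if u = r then 2 * (f u + f u)^2 else 0))"
    using fin rS by (intro sum.cong refl) (simp add: sum.delta)
  also have "\<dots> = 8 * (f r)^2" using fin rS by (simp add: sum.delta power2_eq_square)
  finally show ?thesis .
qed

lemma neg_pt:
  assumes x: "x \<in> S"
  shows "(f x)^2 \<le> (real (diam S adj) + 1/4) / 2 * Wp f"
proof -
  obtain xs where xs: "is_walk adj x r xs" "distinct xs" "length xs \<le> Suc (diam S adj)"
    using short_walk[OF x rS] by blast
  define k where "k = length xs - 1"
  define b where "b i = (-1)^i * (f (xs!i) + f (xs!Suc i))" for i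
  define c where "c = (-1)^k * f r"
  have kD: "k \<le> diam S adj" using xs(3) k_def by simp
  have tel: "(\<Sum>i<k. b i) = (\<Sum>i<k. (-1)^i * f (xs!i) - (-1)^(Suc i) * f (xs!Suc i))"
    unfolding b_def by (intro sum.cong refl) (simp add: algebra_simps)
  have "(\<Sum>i<k. b i) = f x - c"
    unfolding tel sum_lessThan_telescope'[of "\<lambda>i. (-1)^i * f (xs!i)"] c_def
    using walk_nth0[OF xs(1)] walk_nthlast[OF xs(1)] k_def by simp
  hence fx: "f x = (\<Sum>i<k. b i) + c" by simp
  have bsq: "(b i)^2 = (f (xs!i) + f (xs!Suc i))^2" for i
    unfolding b_def by (simp add: power_mult_distrib power_even_eq[symmetric] mult.commute[of i 2])
  have csq: "c^2 = (f r)^2" unfolding c_def by (simp add: power_mult_distrib power_even_eq[symmetric] mult.commute[of k 2])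
  have sb: "(\<Sum>i<k. (b i)^2) \<le> (Wp f - 8 * (f r)^2) / 2"
  proof -
    let ?H = "\<lambda>p. (f (fst p) + f (snd p))^2"
    have "(\<Sum>i<k. ?H (xs!i, xs!Suc i) + ?H (xs!Suc i, xs!i)) \<le> sum ?H AdjS"
      unfolding k_def by (rule path_sum[OF xs(1) xs(2)]) simp
    moreover have "(\<Sum>i<k. ?H (xs!i, xs!Suc i) + ?H (xs!Suc i, xs!i)) = 2 * (\<Sum>i<k. (b i)^2)"
      unfolding bsq by (simp add: sum_distrib_left add.commute)
    moreover have "sum ?H AdjS = Wp f - 8 * (f r)^2" unfolding AdjS_sum Wp_split by (simp only: fst_conv snd_conv)
    ultimately show ?thesis by simp
  qed
  have "(f x)^2 \<le> (real k + 1/4) * ((\<Sum>i<k. (b i)^2) + 4 * c^2)"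
    unfolding fx by (rule key_ineq) (auto intro: sum_nonneg cs_count)
  also have "\<dots> \<le> (real (diam S adj) + 1/4) * ((\<Sum>i<k. (b i)^2) + 4 * c^2)"
    using kD by (intro mult_right_mono add_nonneg_nonneg sum_nonneg) auto
  also have "\<dots> \<le> (real (diam S adj) + 1/4) * (Wp f / 2)"
    using sb csq by (intro mult_left_mono) auto
  finally show ?thesis by simp
qed

lemma neg_bound: "N f \<le> (real (diam S adj) + 1/4) / 2 * Z * Wp f"
proof -
  have "N f \<le> (\<Sum>x\<in>S. dg x * ((real (diam S adj) + 1/4) / 2 * Wp f))"
    unfolding N_def using neg_pt dg_pos by (intro sum_mono mult_left_mono) (auto intro: less_imp_le)
  also have "\<dots> = Z * ((real (diam S adj) + 1/4) / 2 * Wp f)"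
    unfolding Z_def by (simp add: sum_distrib_right)
  also have "\<dots> = (real (diam S adj) + 1/4) / 2 * Z * Wp f" by simp
  finally show ?thesis .
qed

end

context tr begin

definition Pop :: "('a \<Rightarrow> real) \<Rightarrow> 'a \<Rightarrow> real" where
  "Pop f x = (\<Sum>y\<in>S. w x y * f y) / dg x"

definition CC :: real where "CC = (2 * real (diam S adj) + 1) * real (num_edges adj)"
definition lam :: real where "lam = 1 - 1 / CC"

lemma ne_ge1: "1 \<le> real (num_edges adj)" by (simp add: num_edges_def)
lemma CC_ge1: "1 \<le> CC"
proof -
  have "1 \<le> 2 * real (diam S adj) + 1" by simp
  hence "1 * 1 \<le> (2 * real (diam S adj) + 1) * real (num_edges adj)"
    using ne_ge1 by (intro mult_mono) auto
  thus ?thesis unfolding CC_def by simp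
qed
lemma lam_nonneg: "0 \<le> lam" unfolding lam_def using CC_ge1 by (simp add: field_simps)
lemma lam_le1: "lam \<le> 1" unfolding lam_def using CC_ge1 by simp
lemma Z_pos: "0 < Z" using Z_eq ne_ge1 by simp

lemma I_sym: "I f g = I g f"
proof -
  have "I f g = (\<Sum>y\<in>S. \<Sum>x\<in>S. w x y * f x * g y)" unfolding I_def by (rule sum.swap)
  also have "\<dots> = I g f" unfolding I_def
  proof (intro sum.cong refl)
    fix x y show "w y x * f y * g x = w x y * g x * f y" using w_sym[of x y] by simp
  qed
  finally show ?thesis .
qed

lemma I_add_sub: "I (\<lambda>x. f x + g x) (\<lambda>x. f x + g x) - I (\<lambda>x. f x - g x) (\<lambda>x. f x - g x) = 2 * I f g + 2 * I g f"
proof -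
  have "I (\<lambda>x. f x + g x) (\<lambda>x. f x + g x) - I (\<lambda>x. f x - g x) (\<lambda>x. f x - g x)
     = (\<Sum>x\<in>S. \<Sum>y\<in>S. 2 * (w x y * f x * g y) + 2 * (w x y * g x * f y))"
  proof -
    have "I (\<lambda>x. f x + g x) (\<lambda>x. f x + g x) - I (\<lambda>x. f x - g x) (\<lambda>x. f x - g x)
       = (\<Sum>x\<in>S. \<Sum>y\<in>S. w x y * (f x + g x) * (f y + g y) - w x y * (f x - g x) * (f y - g y))"
      unfolding I_def by (simp only: sum_subtractf)
    also have "\<dots> = (\<Sum>x\<in>S. \<Sum>y\<in>S. 2 * (w x y * f x * g y) + 2 * (w x y * g x * f y))"
      by (intro sum.cong refl) (simp add: algebra_simps)
    finally show ?thesis .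
  qed
  also have "\<dots> = 2 * I f g + 2 * I g f" unfolding I_def by (simp only: sum.distrib sum_distrib_left)
  finally show ?thesis .
qed

lemma I_scale: "I (\<lambda>x. c * g x) f = c * I g f"
  unfolding I_def by (simp add: sum_distrib_left mult_ac)

lemma N_add_sub: "N (\<lambda>x. f x + g x) + N (\<lambda>x. f x - g x) = 2 * N f + 2 * N g"
proof -
  have "N (\<lambda>x. f x + g x) + N (\<lambda>x. f x - g x) = (\<Sum>x\<in>S. dg x * (f x + g x)^2 + dg x * (f x - g x)^2)"
    unfolding N_def by (simp only: sum.distrib)
  also have "\<dots> = (\<Sum>x\<in>S. 2 * (dg x * (f x)^2) + 2 * (dg x * (g x)^2))"
    by (intro sum.cong refl) (simp add: power2_sum power2_diff algebra_simps)
  also have "\<dots> = 2 * N f + 2 * N g" unfolding N_def by (simp only: sum.distrib sum_distrib_left)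
  finally show ?thesis .
qed

lemma N_scale: "N (\<lambda>x. c * g x) = c^2 * N g"
  unfolding N_def by (simp add: sum_distrib_left power_mult_distrib mult_ac)

lemma M_add: "M (\<lambda>x. f x + g x) = M f + M g"
  unfolding M_def by (simp add: sum.distrib algebra_simps)
lemma M_sub: "M (\<lambda>x. f x - g x) = M f - M g"
  unfolding M_def by (simp add: sum_subtractf algebra_simps)
lemma M_scale: "M (\<lambda>x. c * g x) = c * M g"
  unfolding M_def by (simp add: sum_distrib_left mult_ac)

lemma I_Pop: "I g f = (\<Sum>x\<in>S. dg x * g x * Pop f x)"
  unfolding I_def Pop_def
proof (rule sum.cong[OF refl])
  fix x assume "x \<in> S"
  hence "dg x \<noteq> 0" using dg_pos by fastforce
  hence "dg x * g x * ((\<Sum>y\<in>S. w x y * f y) / dg x) = g x * (\<Sum>y\<in>S. w x y * f y)" by simp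
  also have "\<dots> = (\<Sum>y\<in>S. w x y * g x * f y)" by (simp add: sum_distrib_left mult.commute mult.left_commute)
  finally show "(\<Sum>y\<in>S. w x y * g x * f y) = dg x * g x * ((\<Sum>y\<in>S. w x y * f y) / dg x)" by simp
qed

lemma M_Pop: "M (Pop f) = M f"
proof -
  have "M (Pop f) = (\<Sum>x\<in>S. \<Sum>y\<in>S. w x y * f y)"
    unfolding M_def Pop_def using dg_pos by (intro sum.cong refl) fastforce
  thus ?thesis using sum_w_right unfolding M_def by simp
qed

lemma N_Pop: "N (Pop f) = I (Pop f) f"
  unfolding I_Pop N_def by (simp add: power2_eq_square mult_ac)

lemma N_nonneg: "0 \<le> N f" unfolding N_def using dg_pos by (intro sum_nonneg mult_nonneg_nonneg) (auto intro: less_imp_le)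

lemma numrad:
  assumes M0: "M f = 0"
  shows "I f f \<le> lam * N f" and "- I f f \<le> lam * N f"
proof -
  have CCZ: "CC = (2 * real (diam S adj) + 1) * Z / 2" unfolding CC_def Z_eq by simp
  have CCp: "0 < CC" using CC_ge1 by simp
  have a: "N f \<le> CC * (N f - I f f)"
  proof -
    have "N f \<le> real (diam S adj) * Z / 4 * W f" by (rule gap_bound[OF M0])
    also have "\<dots> = real (diam S adj) * Z / 2 * (N f - I f f)" unfolding W_eq by (simp add: algebra_simps)
    also have "\<dots> \<le> CC * (N f - I f f)" unfolding CCZ using W_nonneg[of f] Z_pos
      by (intro mult_right_mono) (auto simp: W_eq field_simps)
    finally show ?thesis .
  qed
  have b: "N f \<le> CC * (N f + I f f)"
  proof -
    have "N f \<le> (real (diam S adj) + 1/4) / 2 * Z * Wp f" by (rule neg_bound)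
    also have "\<dots> = (real (diam S adj) + 1/4) * Z * (N f + I f f)" unfolding Wp_eq by (simp add: algebra_simps)
    also have "\<dots> \<le> CC * (N f + I f f)" unfolding CCZ using Wp_nonneg[of f] Z_pos
      by (intro mult_right_mono) (auto simp: Wp_eq field_simps)
    finally show ?thesis .
  qed
  have "N f / CC \<le> N f - I f f" using a CCp by (simp add: field_simps)
  thus "I f f \<le> lam * N f" unfolding lam_def by (simp add: algebra_simps)
  have "N f / CC \<le> N f + I f f" using b CCp by (simp add: field_simps)
  thus "- I f f \<le> lam * N f" unfolding lam_def by (simp add: algebra_simps)
qed

lemma contract:
  assumes M0: "M f = 0"
  shows "N (Pop f) \<le> lam^2 * N f"
proof -
  have key: "4 * c * N (Pop f) \<le> lam * (2 * N f + 2 * c^2 * N (Pop f))" for c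
  proof -
    let ?g = "\<lambda>x. c * Pop f x"
    have Mg: "M ?g = 0" using M_scale M_Pop M0 by simp
    have M1: "M (\<lambda>x. f x + ?g x) = 0" using M_add[of f ?g] Mg M0 by simp
    have M2: "M (\<lambda>x. f x - ?g x) = 0" using M_sub[of f ?g] Mg M0 by simp
    have "I (\<lambda>x. f x + ?g x) (\<lambda>x. f x + ?g x) - I (\<lambda>x. f x - ?g x) (\<lambda>x. f x - ?g x)
        \<le> lam * N (\<lambda>x. f x + ?g x) + lam * N (\<lambda>x. f x - ?g x)"
      using numrad(1)[OF M1] numrad(2)[OF M2] by simp
    moreover have "I (\<lambda>x. f x + ?g x) (\<lambda>x. f x + ?g x) - I (\<lambda>x. f x - ?g x) (\<lambda>x. f x - ?g x) = 4 * c * N (Pop f)"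
      unfolding I_add_sub I_sym[of f ?g] I_scale N_Pop by simp
    moreover have "lam * N (\<lambda>x. f x + ?g x) + lam * N (\<lambda>x. f x - ?g x) = lam * (2 * N f + 2 * c^2 * N (Pop f))"
    proof -
      have e: "N (\<lambda>x. f x + ?g x) + N (\<lambda>x. f x - ?g x) = 2 * N f + 2 * c^2 * N (Pop f)"
        using N_add_sub[of f ?g] N_scale[of c "Pop f"] by simp
      show ?thesis by (simp only: distrib_left[symmetric] e)
    qed
    ultimately show ?thesis by simp
  qed
  show ?thesis
  proof (cases "lam = 0")
    case True
    thus ?thesis using key[of 1] N_nonneg[of "Pop f"] by simp
  next
    case False
    hence lp: "0 < lam" using lam_nonneg by simp
    have "4 * (1/lam) * N (Pop f) \<le> lam * (2 * N f + 2 * (1/lam)^2 * N (Pop f))" by (rule key)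
    hence "4 * N (Pop f) \<le> lam^2 * (2 * N f) + 2 * N (Pop f)" using lp
      by (simp add: field_simps power2_eq_square)
    thus ?thesis by simp
  qed
qed

end

context tr begin

lemma trans_eq: "trans adj r z y = w z y / dg z"
  by (simp add: trans_def w_def dg_def)

lemma stat_eq: "stat_dist S adj r y = dg y / Z"
  by (simp add: stat_dist_def dg_def Z_def)

definition hh :: "'a \<Rightarrow> nat \<Rightarrow> 'a \<Rightarrow> real" where
  "hh x t y = trans_pow S adj r t x y * Z / dg y"

fun Gr :: "'a \<Rightarrow> nat \<Rightarrow> 'a \<Rightarrow> real" where
  "Gr x 0 = (\<lambda>y. hh x 0 y - 1)"
| "Gr x (Suc t) = Pop (Gr x t)"

lemma Pop_cong: "(\<And>z. z \<in> S \<Longrightarrow> f z = g z) \<Longrightarrow> Pop f y = Pop g y"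
  unfolding Pop_def by (metis (no_types, lifting) sum.cong)

lemma hh_Suc: "y \<in> S \<Longrightarrow> hh x (Suc t) y - 1 = Pop (\<lambda>z. hh x t z - 1) y"
proof -
  assume y: "y \<in> S"
  have dy: "dg y \<noteq> 0" using dg_pos[OF y] by simp
  have "(\<Sum>z\<in>S. w y z * (hh x t z - 1)) = (\<Sum>z\<in>S. w y z * hh x t z) - dg y"
    using dg_sum[OF y] by (simp add: right_diff_distrib sum_subtractf)
  moreover have "(\<Sum>z\<in>S. w y z * hh x t z) = (\<Sum>z\<in>S. trans_pow S adj r t x z * trans adj r z y) * Z"
    unfolding hh_def trans_eq sum_distrib_right by (intro sum.cong refl) (simp add: w_sym[of y])
  ultimately have "Pop (\<lambda>z. hh x t z - 1) y = ((\<Sum>z\<in>S. trans_pow S adj r t x z * trans adj r z y) * Z - dg y) / dg y"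
    unfolding Pop_def by simp
  also have "\<dots> = hh x (Suc t) y - 1"
  proof -
    have "trans_pow S adj r (Suc t) x y = (\<Sum>z\<in>S. trans_pow S adj r t x z * trans adj r z y)" by simp
    thus ?thesis unfolding hh_def using dy by (simp add: diff_divide_distrib)
  qed
  finally show ?thesis by simp
qed

lemma Gr_eq: "y \<in> S \<Longrightarrow> Gr x t y = hh x t y - 1"
proof (induction t arbitrary: y)
  case 0 thus ?case by simp
next
  case (Suc t)
  have "Gr x (Suc t) y = Pop (\<lambda>z. hh x t z - 1) y" unfolding Gr.simps by (rule Pop_cong) (rule Suc.IH)
  thus ?case using hh_Suc[OF Suc.prems] by simp
qed

lemma M_Gr0: "x \<in> S \<Longrightarrow> M (Gr x 0) = 0"
proof -
  assume x: "x \<in> S"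
  have "M (Gr x 0) = (\<Sum>y\<in>S. (if x = y then Z else 0) - dg y)"
    unfolding M_def
  proof (intro sum.cong refl)
    fix y assume "y \<in> S"
    hence "dg y \<noteq> 0" using dg_pos by fastforce
    thus "dg y * Gr x 0 y = (if x = y then Z else 0) - dg y" by (simp add: hh_def field_simps)
  qed
  also have "\<dots> = 0" using x fin by (simp add: sum_subtractf Z_def)
  finally show ?thesis .
qed

lemma N_Gr0: "x \<in> S \<Longrightarrow> N (Gr x 0) \<le> Z^2"
proof -
  assume x: "x \<in> S"
  have dx: "1 \<le> dg x" using dg_ge1[OF x] .
  have "N (Gr x 0) = (\<Sum>y\<in>S. (if x = y then Z^2 / dg x - 2 * Z else 0) + dg y)"
    unfolding N_def
  proof (intro sum.cong refl)
    fix y assume "y \<in> S"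
    hence "dg y \<noteq> 0" using dg_pos by fastforce
    thus "dg y * (Gr x 0 y)^2 = (if x = y then Z^2 / dg x - 2 * Z else 0) + dg y"
      by (simp add: hh_def field_simps power2_eq_square)
  qed
  also have "\<dots> = Z^2 / dg x - Z" using x fin by (simp add: sum.distrib Z_def)
  also have "\<dots> \<le> Z^2 / dg x" using Z_pos by simp
  also have "\<dots> \<le> Z^2 / 1" using dx Z_pos by (intro divide_left_mono) auto
  also have "\<dots> = Z^2" by simp
  finally show ?thesis .
qed

lemma N_Gr: "x \<in> S \<Longrightarrow> M (Gr x t) = 0 \<and> N (Gr x t) \<le> lam^(2*t) * Z^2"
proof (induction t)
  case 0 thus ?case using M_Gr0 N_Gr0 by simp
next
  case (Suc t)
  have "N (Gr x (Suc t)) \<le> lam^2 * N (Gr x t)" using contract Suc by simp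
  also have "\<dots> \<le> lam^2 * (lam^(2*t) * Z^2)" using Suc by (intro mult_left_mono) auto
  also have "\<dots> = lam^(2 * Suc t) * Z^2" by (simp only: mult_Suc_right power_add mult.assoc)
  finally show ?case using Suc M_Pop by simp
qed

lemma tv_sq: "x \<in> S \<Longrightarrow> (tv_dist S (trans_pow S adj r t x) (stat_dist S adj r))^2 \<le> lam^(2*t) * Z / 4"
proof -
  assume x: "x \<in> S"
  have Zp: "0 < Z" by (rule Z_pos)
  have "tv_dist S (trans_pow S adj r t x) (stat_dist S adj r) = 1/2 * (\<Sum>y\<in>S. (dg y / Z) * \<bar>Gr x t y\<bar>)"
    unfolding tv_dist_def
  proof (intro arg_cong[where f="\<lambda>s. 1/2 * s"] sum.cong refl)
    fix y assume y: "y \<in> S"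
    have dy: "0 < dg y" using dg_pos[OF y] .
    have "trans_pow S adj r t x y - stat_dist S adj r y = (dg y / Z) * Gr x t y"
      unfolding Gr_eq[OF y] stat_eq hh_def using dy Zp by (simp add: field_simps)
    thus "\<bar>trans_pow S adj r t x y - stat_dist S adj r y\<bar> = dg y / Z * \<bar>Gr x t y\<bar>"
      using dy Zp by (simp add: abs_mult)
  qed
  moreover have "(\<Sum>y\<in>S. (dg y / Z) * \<bar>Gr x t y\<bar>)^2 \<le> (\<Sum>y\<in>S. dg y / Z) * (\<Sum>y\<in>S. (dg y / Z) * \<bar>Gr x t y\<bar>^2)"
    using dg_pos Zp by (intro weighted_cs) (auto intro: less_imp_le)
  moreover have "(\<Sum>y\<in>S. dg y / Z) = 1" using Zp by (simp add: Z_def sum_divide_distrib[symmetric])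
  moreover have "(\<Sum>y\<in>S. (dg y / Z) * \<bar>Gr x t y\<bar>^2) = N (Gr x t) / Z"
    unfolding N_def by (simp add: sum_divide_distrib)
  ultimately have A: "(tv_dist S (trans_pow S adj r t x) (stat_dist S adj r)) = 1/2 * (\<Sum>y\<in>S. (dg y / Z) * \<bar>Gr x t y\<bar>)"
    and B: "(\<Sum>y\<in>S. (dg y / Z) * \<bar>Gr x t y\<bar>)^2 \<le> N (Gr x t) / Z" by simp_all
  have "(tv_dist S (trans_pow S adj r t x) (stat_dist S adj r))^2 = 1/4 * (\<Sum>y\<in>S. (dg y / Z) * \<bar>Gr x t y\<bar>)^2"
    unfolding A by (simp add: power_mult_distrib power2_eq_square)
  also have "\<dots> \<le> 1/4 * (N (Gr x t) / Z)" using B by simp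
  also have "\<dots> \<le> 1/4 * (lam^(2*t) * Z^2 / Z)" using N_Gr[OF x] Zp by (intro mult_left_mono divide_right_mono) auto
  also have "\<dots> = lam^(2*t) * Z / 4" using Zp by (simp add: power2_eq_square)
  finally show ?thesis .
qed

end

lemma ln8_ge2: "2 \<le> ln (8::real)"
proof -
  have "ln (exp 2) \<le> ln (8::real)" using exp2_le8 by (subst ln_le_cancel_iff) auto
  thus ?thesis by simp
qed

context tr begin

lemma tmix_bound:
  assumes e0: "0 < \<epsilon>" and e1: "\<epsilon> < 1"
  shows "real (t_mix S adj r \<epsilon>) \<le> CC * ln (Z / \<epsilon>)"
proof -
  have Z2: "2 \<le> Z" using Z_eq ne_ge1 by simp
  have CC1: "1 \<le> CC" by (rule CC_ge1)
  define L where "L = ln (Z / (4 * \<epsilon>^2))"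
  define a where "a = CC / 2 * L"
  define T where "T = nat \<lceil>a\<rceil>"
  have aT: "a \<le> real T" unfolding T_def by (rule real_nat_ceiling_ge)
  have q: "0 < Z / (4 * \<epsilon>^2)" using Z2 e0 by simp
  have lamexp: "lam \<le> exp (- 1 / CC)" unfolding lam_def using exp_ge_add_one_self[of "- 1 / CC"] by simp
  have "lam^(2*T) \<le> exp (- 1 / CC) ^ (2*T)" using lamexp lam_nonneg by (rule power_mono[OF _ ]) 
  also have "\<dots> = exp (real (2*T) * (- 1 / CC))" by (rule exp_of_nat_mult[symmetric])
  also have "\<dots> \<le> exp (- L)"
  proof -
    have "L \<le> 2 * real T / CC" using aT CC1 unfolding a_def by (simp add: field_simps)
    thus ?thesis by simp
  qed
  also have "\<dots> = 4 * \<epsilon>^2 / Z" unfolding L_def using q by (simp add: exp_minus')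
  finally have lamT: "lam^(2*T) \<le> 4 * \<epsilon>^2 / Z" .
  have tvT: "\<forall>x\<in>S. tv_dist S (trans_pow S adj r T x) (stat_dist S adj r) \<le> \<epsilon>"
  proof
    fix x assume x: "x \<in> S"
    have "(tv_dist S (trans_pow S adj r T x) (stat_dist S adj r))^2 \<le> lam^(2*T) * Z / 4" by (rule tv_sq[OF x])
    also have "\<dots> \<le> (4 * \<epsilon>^2 / Z) * Z / 4" using lamT Z_pos by (intro divide_right_mono mult_right_mono) auto
    also have "\<dots> = \<epsilon>^2" using Z_pos by simp
    finally have "(tv_dist S (trans_pow S adj r T x) (stat_dist S adj r))^2 \<le> \<epsilon>^2" .
    moreover have "0 \<le> \<epsilon>" using e0 by simp
    ultimately show "tv_dist S (trans_pow S adj r T x) (stat_dist S adj r) \<le> \<epsilon>"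
      by (rule power2_le_imp_le)
  qed
  have tm: "t_mix S adj r \<epsilon> \<le> T" unfolding t_mix_def by (rule Least_le) (rule tvT)
  have "1 < Z / \<epsilon>" using Z2 e0 e1 by (simp add: field_simps)
  hence lnpos: "0 < ln (Z / \<epsilon>)" by (rule ln_gt_zero)
  have "real T \<le> CC * ln (Z / \<epsilon>)"
  proof (cases "a \<le> 0")
    case True
    hence "T = 0" unfolding T_def by simp
    thus ?thesis using lnpos CC1 by simp
  next
    case False
    hence "real T = of_int \<lceil>a\<rceil>" unfolding T_def by simp
    hence "real T \<le> a + 1" by simp
    also have "a + 1 \<le> CC * ln (Z / \<epsilon>)"
    proof -
      have l1: "L = ln Z - ln 4 - 2 * ln \<epsilon>" unfolding L_def using Z2 e0
        by (simp add: ln_div ln_mult ln_realpow)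
      have l2: "ln (Z / \<epsilon>) = ln Z - ln \<epsilon>" using Z2 e0 by (simp add: ln_div)
      have l3: "ln 8 = ln 2 + ln (4::real)" using ln_mult[of 2 "4::real"] by simp
      have lZ: "ln 2 \<le> ln Z" using Z2 by simp
      have "CC * ln (Z / \<epsilon>) - a = CC / 2 * (ln Z + ln 4)" unfolding a_def l1 l2 by (simp add: algebra_simps)
      moreover have "1 \<le> CC / 2 * (ln Z + ln 4)"
      proof -
        have "2 \<le> ln Z + ln 4" using ln8_ge2 l3 lZ by linarith
        hence "1 * 2 \<le> CC * (ln Z + ln 4)" using CC1 by (intro mult_mono) auto
        thus ?thesis by simp
      qed
      ultimately show ?thesis by linarith
    qed
    finally show ?thesis .
  qed
  thus ?thesis using tm by linarith
qed

end

theorem corollary2p5: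
  fixes S :: "'a set" and adj :: "'a \<Rightarrow> 'a \<Rightarrow> bool" and r :: 'a and \<epsilon> :: real
  assumes "is_tree S adj" and "r \<in> S" and "0 < \<epsilon>" and "\<epsilon> < 1"
  shows "real (t_mix S adj r \<epsilon>)
     \<le> (2 * real (diam S adj) + 1) * real (num_edges adj) * ln (2 * real (num_edges adj) / \<epsilon>)"
proof -
  have sg: "simple_graph S adj" and con: "graph_connected S adj" using assms(1) by (auto simp: is_tree_def)
  interpret tr S adj r using sg con assms(2) by unfold_locales
  have "real (t_mix S adj r \<epsilon>) \<le> CC * ln (Z / \<epsilon>)" using assms(3,4) by (rule tmix_bound)
  thus ?thesis unfolding CC_def Z_eq by simp
qed

end
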